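(* Let $X\subset\mathbb{R}^n$ be finite, $\epsilon\ge0$, and $\sigma$ a degree-compatible term ordering, and run the ABM algorithm with gradient-weighted normalization (described in the context) on $(X,\epsilon,\sigma)$. Then at every point during the run: (1) no polynomial $h\in\mathrm{Span}(\mathcal{O})$ (for the current set $\mathcal{O}$) with $\|h\|_{\mathrm{gw},X}=1$ is $\epsilon$-approximately vanishing for $X$; (2) each polynomial $g=v_1b+v_2o_1+\cdots+v_{s+1}o_s$ formed in step S3 satisfies $\|g\|_{\mathrm{gw},X}=1$, has nonzero coefficient $v_1$ on $b$, and is $\sqrt{\lambda_{\min}}$-approximately vanishing for $X$, i.e. $\|g(X)\|\le\sqrt{\lambda_{\min}}$.
   Context: For $X=\{\mathbf{x}_1,\ldots,\mathbf{x}_N\}$ and a polynomial $h$, $h(X)=(h(\mathbf{x}_1),\ldots,h(\mathbf{x}_N))^\top$; $\|\cdot\|$ is the Euclidean norm. A polynomial $g$ is $\epsilon$-approximately vanishing for $X$ if $\|g(X)\|\le\epsilon$. Gradient norm: $\|g\|_{g,X}=\sqrt{\sum_{\mathbf{x}\in X}\|\nabla g(\mathbf{x})\|^2}/\sqrt{\sum_{k=1}^n\deg_k(g)^2}$, and $0$ for constant $g$. Gradient-weighted norm of $g=\sum_ic_it_i$ (distinct terms $t_i$): $\|g\|_{\mathrm{gw},X}=\sqrt{\sum_ic_i^2\|t_i\|_{g,X}^2}$; $g$ is gradient-weighted unitary if this equals $1$. $\mathrm{Span}(\cdot)$ is the real linear span. The border of a set of terms $\mathcal{O}$ is $\partial\mathcal{O}=(\bigcup_k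 x_k\mathcal{O})\setminus\mathcal{O}$. ABM algorithm with gradient-weighted normalization, input $(X,\epsilon,\sigma)$: initialize $G=\emptyset$, $\mathcal{O}=\{1\}$. For $d=1,2,\ldots$: set $L=\{b\in\partial\mathcal{O}:\deg b=d\}$; if $L=\emptyset$, output $(\mathcal{O},G)$ and stop. Otherwise repeat until $L$ is empty: (S1) take the $\sigma$-smallest $b\in L$ and remove it from $L$; (S2) with current $\mathcal{O}=\{o_1,\ldots,o_s\}$, let $M=(b(X)\ o_1(X)\ \cdots\ o_s(X))$ and $D=\mathrm{diag}(\|b\|_{\mathrm{gw},X},\|o_1\|_{\mathrm{gw},X},\ldots,\|o_s\|_{\mathrm{gw},X})$, and compute the smallest generalized eigenvalue $\lambda_{\min}$ and a corresponding generalized eigenvector $\mathbf{v}_{\min}=(v_1,\ldots,v_{s+1})^\top$ of $M^\top M\mathbf{v}=\lambda D^2\mathbf{v}$, normalized by $\mathbf{v}_{\min}^\top D^2\mathbf{v}_{\min}=1$; (S3) if $\sqrt{\lambda_{\min}}\le\epsilon$, add $g=v_1b+v_2o_1+\cdots+v_{s+1}o_s$ to $G$; otherwise add $b$ to $\mathcal{O}$. *)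

theory Defs
  imports "HOL-Analysis.Analysis"
begin

text \<open>Terms (monomials) in the variables indexed by the finite type 'n are exponent
  vectors; points of X are vectors in real^'n. Polynomials are coefficient functions
  from terms to reals (with finite support).\<close>

type_synonym 'n "term" = "'n \<Rightarrow> nat"
type_synonym 'n polyn = "'n term \<Rightarrow> real"

definition one_term :: "'n term" where
  "one_term = (\<lambda>k. 0)"

definition tdeg :: "('n::finite) term \<Rightarrow> nat" where
  "tdeg t = (\<Sum>k\<in>UNIV. t k)"

definition term_eval :: "('n::finite) term \<Rightarrow> real^'n \<Rightarrow> real" where
  "term_eval t x = (\<Prod>k\<in>UNIV. (x $ k) ^ (t k))"

definition partial_deriv :: "(real^'n \<Rightarrow> real) \<Rightarrow> 'n \<Rightarrow> real^'n \<Rightarrow> real" where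
  "partial_deriv f k x = deriv (\<lambda>s. f (x + s *\<^sub>R axis k 1)) 0"

definition grad_norm_sq :: "('n::finite) term \<Rightarrow> real^'n \<Rightarrow> real" where
  "grad_norm_sq t x = (\<Sum>k\<in>UNIV. (partial_deriv (term_eval t) k x)^2)"

definition term_gnorm :: "(real^'n) set \<Rightarrow> ('n::finite) term \<Rightarrow> real" where
  "term_gnorm X t =
     (if tdeg t = 0 then 0
      else sqrt (\<Sum>x\<in>X. grad_norm_sq t x) / sqrt (\<Sum>k\<in>UNIV. (real (t k))^2))"

definition poly_support :: "'n polyn \<Rightarrow> 'n term set" where
  "poly_support c = {t. c t \<noteq> 0}"

definition poly_eval :: "('n::finite) polyn \<Rightarrow> real^'n \<Rightarrow> real" where
  "poly_eval c x = (\<Sum>t\<in>poly_support c. c t * term_eval t x)"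

definition eval_norm :: "(real^'n) set \<Rightarrow> ('n::finite) polyn \<Rightarrow> real" where
  "eval_norm X c = sqrt (\<Sum>x\<in>X. (poly_eval c x)^2)"

definition approx_vanishing :: "(real^'n) set \<Rightarrow> real \<Rightarrow> ('n::finite) polyn \<Rightarrow> bool" where
  "approx_vanishing X eps c \<longleftrightarrow> eval_norm X c \<le> eps"

definition gw_norm :: "(real^'n) set \<Rightarrow> ('n::finite) polyn \<Rightarrow> real" where
  "gw_norm X c = sqrt (\<Sum>t\<in>poly_support c. (c t)^2 * (term_gnorm X t)^2)"

definition monom :: "'n term \<Rightarrow> 'n polyn" where
  "monom t = (\<lambda>s. if s = t then 1 else 0)"

definition poly_span :: "'n term set \<Rightarrow> 'n polyn set" where
  "poly_span Os = {c. \<forall>t. c t \<noteq> 0 \<longrightarrow> t \<in> Os}"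

definition mult_var :: "'n \<Rightarrow> 'n term \<Rightarrow> 'n term" where
  "mult_var k t = t(k := Suc (t k))"

definition border :: "'n term set \<Rightarrow> 'n term set" where
  "border Os = (\<Union>k. mult_var k ` Os) - Os"

definition term_ordering :: "('n term \<Rightarrow> 'n term \<Rightarrow> bool) \<Rightarrow> bool" where
  "term_ordering ordl \<longleftrightarrow>
     (\<forall>a. \<not> ordl a a) \<and>
     (\<forall>a b c. ordl a b \<longrightarrow> ordl b c \<longrightarrow> ordl a c) \<and>
     (\<forall>a b. a \<noteq> b \<longrightarrow> ordl a b \<or> ordl b a) \<and>
     (\<forall>t. t \<noteq> one_term \<longrightarrow> ordl one_term t) \<and>
     (\<forall>a b c. ordl a b \<longrightarrow> ordl (\<lambda>k. a k + c k) (\<lambda>k. b k + c k))"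

definition degree_compatible :: "(('n::finite) term \<Rightarrow> 'n term \<Rightarrow> bool) \<Rightarrow> bool" where
  "degree_compatible ordl \<longleftrightarrow> (\<forall>a b. tdeg a < tdeg b \<longrightarrow> ordl a b)"

text \<open>Step S2: B = {b} \<union> Os indexes the columns of M; (M^T M) w = lam D^2 w written
  componentwise, with D the diagonal of gradient-weighted norms of the terms.\<close>
definition gen_eig_eq ::
  "(real^'n) set \<Rightarrow> ('n::finite) term set \<Rightarrow> 'n term \<Rightarrow> real \<Rightarrow> 'n polyn \<Rightarrow> bool" where
  "gen_eig_eq X Os b lam w \<longleftrightarrow>
     (\<forall>t. t \<notin> insert b Os \<longrightarrow> w t = 0) \<and>
     (\<forall>t\<in>insert b Os.
        (\<Sum>t'\<in>insert b Os. (\<Sum>x\<in>X. term_eval t x * term_eval t' x) * w t')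
          = lam * (gw_norm X (monom t))^2 * w t)"

definition gen_eigenvalue ::
  "(real^'n) set \<Rightarrow> ('n::finite) term set \<Rightarrow> 'n term \<Rightarrow> real \<Rightarrow> bool" where
  "gen_eigenvalue X Os b lam \<longleftrightarrow>
     (\<exists>w. gen_eig_eq X Os b lam w \<and> (\<exists>t\<in>insert b Os. w t \<noteq> 0))"

text \<open>(lam, v) is a valid outcome of step S2: lam is the smallest generalized eigenvalue
  and v a corresponding generalized eigenvector with v^T D^2 v = 1.\<close>
definition abm_S2 ::
  "(real^'n) set \<Rightarrow> ('n::finite) term set \<Rightarrow> 'n term \<Rightarrow> real \<Rightarrow> 'n polyn \<Rightarrow> bool" where
  "abm_S2 X Os b lam v \<longleftrightarrow>
     gen_eigenvalue X Os b lam \<and> (\<forall>mu. gen_eigenvalue X Os b mu \<longrightarrow> lam \<le> mu) \<and>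
     gen_eig_eq X Os b lam v \<and>
     (\<Sum>t\<in>insert b Os. (gw_norm X (monom t))^2 * (v t)^2) = 1"

text \<open>States: (d, L, Os, G, stopped).\<close>
type_synonym 'n abm_state = "nat \<times> 'n term set \<times> 'n term set \<times> 'n polyn set \<times> bool"

definition abm_init :: "'n abm_state" where
  "abm_init = (0, {}, {one_term}, {}, False)"

inductive abm_step ::
  "(real^'n) set \<Rightarrow> real \<Rightarrow> (('n::finite) term \<Rightarrow> 'n term \<Rightarrow> bool)
     \<Rightarrow> 'n abm_state \<Rightarrow> 'n abm_state \<Rightarrow> bool"
  for X eps ordl where
  next_degree:
    "{b\<in>border Os. tdeg b = Suc d} \<noteq> {} \<Longrightarrow>
     abm_step X eps ordl (d, {}, Os, G, False)
       (Suc d, {b\<in>border Os. tdeg b = Suc d}, Os, G, False)"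
| stop:
    "{b\<in>border Os. tdeg b = Suc d} = {} \<Longrightarrow>
     abm_step X eps ordl (d, {}, Os, G, False) (d, {}, Os, G, True)"
| process:
    "b \<in> L \<Longrightarrow> (\<forall>b'\<in>L. b' \<noteq> b \<longrightarrow> ordl b b') \<Longrightarrow> abm_S2 X Os b lam v \<Longrightarrow>
     abm_step X eps ordl (d, L, Os, G, False)
       (d, L - {b},
        if sqrt lam \<le> eps then Os else insert b Os,
        if sqrt lam \<le> eps then insert v G else G, False)"

definition abm_reachable ::
  "(real^'n) set \<Rightarrow> real \<Rightarrow> (('n::finite) term \<Rightarrow> 'n term \<Rightarrow> bool) \<Rightarrow> 'n abm_state \<Rightarrow> bool" where
  "abm_reachable X eps ordl s \<longleftrightarrow> (abm_step X eps ordl)\<^sup>*\<^sup>* abm_init s"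

end

theory Submission
  imports Defs
begin

definition Pw :: "('n::finite) term set \<Rightarrow> 'n polyn \<Rightarrow> real^'n \<Rightarrow> real" where
  "Pw B w x = (\<Sum>t\<in>B. w t * term_eval t x)"
definition qa :: "(real^'n) set \<Rightarrow> ('n::finite) term set \<Rightarrow> 'n polyn \<Rightarrow> real" where
  "qa X B w = (\<Sum>x\<in>X. (Pw B w x)^2)"
definition bt :: "(real^'n) set \<Rightarrow> ('n::finite) term \<Rightarrow> real" where
  "bt X t = (gw_norm X (monom t))^2"
definition qb :: "(real^'n) set \<Rightarrow> ('n::finite) term set \<Rightarrow> 'n polyn \<Rightarrow> real" where
  "qb X B w = (\<Sum>t\<in>B. bt X t * (w t)^2)"
definition LH :: "(real^'n) set \<Rightarrow> ('n::finite) term set \<Rightarrow> 'n term \<Rightarrow> 'n polyn \<Rightarrow> real" where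
  "LH X B t w = (\<Sum>t'\<in>B. (\<Sum>x\<in>X. term_eval t x * term_eval t' x) * w t')"

lemma LH_eq: "LH X B t w = (\<Sum>x\<in>X. term_eval t x * Pw B w x)"
  unfolding LH_def Pw_def
  by (simp add: sum_distrib_left sum_distrib_right mult_ac sum.swap[of _ B X])

lemma qa_bilin: "qa X B w = (\<Sum>t\<in>B. w t * LH X B t w)"
proof -
  have "(\<Sum>t\<in>B. w t * LH X B t w) = (\<Sum>t\<in>B. \<Sum>x\<in>X. w t * term_eval t x * Pw B w x)"
    by (simp add: LH_eq sum_distrib_left mult_ac)
  also have "\<dots> = (\<Sum>x\<in>X. \<Sum>t\<in>B. w t * term_eval t x * Pw B w x)"
    by (rule sum.swap)
  also have "\<dots> = (\<Sum>x\<in>X. Pw B w x * Pw B w x)"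
    by (simp add: Pw_def sum_distrib_right)
  finally show ?thesis by (simp add: qa_def power2_eq_square)
qed

lemma bt_eq: "bt X t = (term_gnorm X t)^2"
proof -
  have "poly_support (monom t) = {t}" by (auto simp: poly_support_def monom_def)
  then show ?thesis by (simp add: bt_def gw_norm_def monom_def)
qed

lemma term_gnorm_nonneg: "term_gnorm X t \<ge> 0"
  unfolding term_gnorm_def grad_norm_sq_def
  by (auto intro!: divide_nonneg_nonneg sum_nonneg)

lemma bt_nonneg: "bt X t \<ge> 0" by (simp add: bt_eq)

lemma supp_sub: "(\<forall>t. t \<notin> B \<longrightarrow> w t = 0) \<Longrightarrow> poly_support w \<subseteq> B"
  by (auto simp: poly_support_def)

lemma poly_eval_Pw:
  assumes "finite B" "\<forall>t. t \<notin> B \<longrightarrow> w t = 0"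
  shows "poly_eval w x = Pw B w x"
  unfolding poly_eval_def Pw_def
  by (rule sum.mono_neutral_left) (use assms in \<open>auto simp: poly_support_def\<close>)

lemma eval_norm_qa:
  assumes "finite B" "\<forall>t. t \<notin> B \<longrightarrow> w t = 0"
  shows "eval_norm X w = sqrt (qa X B w)"
  unfolding eval_norm_def qa_def using poly_eval_Pw[OF assms] by simp

lemma gw_norm_qb:
  assumes "finite B" "\<forall>t. t \<notin> B \<longrightarrow> w t = 0"
  shows "gw_norm X w = sqrt (qb X B w)"
proof -
  have "(\<Sum>t\<in>poly_support w. (w t)^2 * (term_gnorm X t)^2) = (\<Sum>t\<in>B. (w t)^2 * (term_gnorm X t)^2)"
    by (rule sum.mono_neutral_left) (use assms in \<open>auto simp: poly_support_def\<close>)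
  then show ?thesis by (simp add: gw_norm_def qb_def bt_eq mult_ac)
qed

lemma qa_nonneg: "qa X B w \<ge> 0" by (simp add: qa_def sum_nonneg)
lemma qb_nonneg: "qb X B w \<ge> 0" by (simp add: qb_def sum_nonneg bt_nonneg)

lemma Pw_lin: "Pw B (\<lambda>t. w t + s * u t) x = Pw B w x + s * Pw B u x"
  by (simp add: Pw_def algebra_simps sum.distrib sum_distrib_left)

lemma qa_lin: "qa X B (\<lambda>t. w t + s * u t) = qa X B w + 2 * s * (\<Sum>x\<in>X. Pw B w x * Pw B u x) + s^2 * qa X B u"
  by (simp add: qa_def Pw_lin power2_sum sum.distrib sum_distrib_left power_mult_distrib mult_ac)

lemma qb_lin: "qb X B (\<lambda>t. w t + s * u t) = qb X B w + 2 * s * (\<Sum>t\<in>B. bt X t * w t * u t) + s^2 * qb X B u"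
  by (simp add: qb_def power2_sum sum.distrib sum_distrib_left power_mult_distrib algebra_simps)

lemma Pw_scale: "Pw B (\<lambda>t. c * w t) x = c * Pw B w x"
  by (simp add: Pw_def sum_distrib_left mult_ac)
lemma qa_scale: "qa X B (\<lambda>t. c * w t) = c^2 * qa X B w"
  by (simp add: qa_def Pw_scale power_mult_distrib sum_distrib_left)
lemma qb_scale: "qb X B (\<lambda>t. c * w t) = c^2 * qb X B w"
  by (simp add: qb_def power_mult_distrib sum_distrib_left mult_ac)

lemma Pw_ind: "finite B \<Longrightarrow> t0 \<in> B \<Longrightarrow> Pw B (\<lambda>t. if t = t0 then 1 else 0) x = term_eval t0 x"
proof -
  assume a: "finite B" "t0 \<in> B"
  have "Pw B (\<lambda>t. if t = t0 then 1 else 0) x = (\<Sum>t\<in>B. if t = t0 then term_eval t x else 0)"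
    unfolding Pw_def by (rule sum.cong) auto
  also have "\<dots> = term_eval t0 x" using a by (simp add: sum.delta')
  finally show ?thesis .
qed

lemma quad_lemma:
  fixes L c :: real
  assumes "\<forall>s. 2 * s * L + s^2 * c \<ge> 0" "c \<ge> 0"
  shows "L = 0"
proof (rule ccontr)
  assume "L \<noteq> 0"
  have "2 * (- L / (c + 1)) * L + (- L / (c + 1))^2 * c \<ge> 0" using assms(1) by blast
  moreover have "2 * (- L / (c + 1)) * L + (- L / (c + 1))^2 * c = L^2 * (- c - 2) / (c+1)^2"
  proof -
    have cp: "c + 1 \<noteq> 0" using assms(2) by linarith
    have "2 * (- L / (c + 1)) * L = (-2 * L^2 * (c+1)) / (c+1)^2"
      using cp by (simp add: power2_eq_square)
    moreover have "(- L / (c + 1))^2 * c = (L^2 * c) / (c+1)^2"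
      by (simp add: power_divide)
    ultimately show ?thesis by (simp add: add_divide_distrib[symmetric] algebra_simps)
  qed
  moreover have "L^2 * (- c - 2) / (c+1)^2 < 0"
    using assms(2) \<open>L \<noteq> 0\<close> by (intro divide_neg_pos mult_pos_neg) auto
  ultimately show False by linarith
qed

lemma gen_eig_eq_iff:
  "gen_eig_eq X Os b mu w \<longleftrightarrow>
     (\<forall>t. t \<notin> insert b Os \<longrightarrow> w t = 0) \<and>
     (\<forall>t\<in>insert b Os. LH X (insert b Os) t w = mu * bt X t * w t)"
  by (simp add: gen_eig_eq_def LH_def bt_def)

lemma sum_ind: "finite B \<Longrightarrow> t0 \<in> B \<Longrightarrow>
   (\<Sum>t\<in>B. f t * (if t = t0 then 1 else 0)) = (f t0 :: real)"
proof -
  assume a: "finite B" "t0 \<in> B"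
  have "(\<Sum>t\<in>B. f t * (if t = t0 then 1 else 0)) = (\<Sum>t\<in>B. if t = t0 then f t else 0)"
    by (rule sum.cong) auto
  also have "\<dots> = f t0" using a by (simp add: sum.delta')
  finally show ?thesis .
qed

lemma compact_K:
  assumes fB: "finite B"
  shows "compact {w::'a \<Rightarrow> real. (\<forall>t. t \<notin> B \<longrightarrow> w t = 0) \<and> (\<Sum>t\<in>B. (w t)^2) = 1}"
proof -
  define S where "S = (\<lambda>t. if t \<in> B then {-1..1} else {0::real})"
  have eq: "{w::'a \<Rightarrow> real. (\<forall>t. t \<notin> B \<longrightarrow> w t = 0) \<and> (\<Sum>t\<in>B. (w t)^2) = 1}
      = PiE UNIV S \<inter> {w. (\<Sum>t\<in>B. (w t)^2) = 1}"
  proof (rule set_eqI, rule iffI)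
    fix w :: "'a \<Rightarrow> real"
    assume "w \<in> {w::'a \<Rightarrow> real. (\<forall>t. t \<notin> B \<longrightarrow> w t = 0) \<and> (\<Sum>t\<in>B. (w t)^2) = 1}"
    then have h: "\<forall>t. t \<notin> B \<longrightarrow> w t = 0" "(\<Sum>t\<in>B. (w t)^2) = 1" by auto
    have "\<forall>t\<in>B. (w t)^2 \<le> 1"
    proof
      fix t assume "t \<in> B"
      then have "(w t)^2 \<le> (\<Sum>t\<in>B. (w t)^2)"
        by (intro member_le_sum fB) auto
      then show "(w t)^2 \<le> 1" using h by simp
    qed
    then have "\<forall>t\<in>B. \<bar>w t\<bar> \<le> 1" by (simp add: abs_square_le_1)
    then have "\<forall>t. w t \<in> S t" using h by (auto simp: S_def abs_le_iff)
    then show "w \<in> PiE UNIV S \<inter> {w. (\<Sum>t\<in>B. (w t)^2) = 1}" using h by (auto simp: PiE_iff)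
  next
    fix w :: "'a \<Rightarrow> real"
    assume "w \<in> PiE UNIV S \<inter> {w. (\<Sum>t\<in>B. (w t)^2) = 1}"
    then show "w \<in> {w::'a \<Rightarrow> real. (\<forall>t. t \<notin> B \<longrightarrow> w t = 0) \<and> (\<Sum>t\<in>B. (w t)^2) = 1}"
      by (auto simp: PiE_iff S_def split: if_splits)
  qed
  have "\<forall>i. compactin euclidean (S i)"
    by (auto simp: S_def compactin_euclidean_iff)
  then have "compactin (product_topology (\<lambda>_. euclidean) UNIV) (PiE UNIV S)"
    by (simp add: compactin_PiE)
  then have c1: "compact (PiE UNIV S)"
    by (simp add: euclidean_product_topology compactin_euclidean_iff)
  have c2: "closed {w::'a \<Rightarrow> real. (\<Sum>t\<in>B. (w t)^2) = 1}"
    by (intro closed_Collect_eq continuous_intros continuous_on_product_coordinates)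
  show ?thesis unfolding eq using c1 c2 by (rule compact_Int_closed)
qed

lemma cont_coord [continuous_intros]: "continuous_on S (\<lambda>x. x i :: 'b::topological_space)"
  by (rule continuous_on_subset[OF continuous_on_product_coordinates]) auto

lemma rayleigh:
  assumes fX: "finite X" and fB: "finite (insert b Os)"
    and mn: "\<forall>mu. gen_eigenvalue X Os b mu \<longrightarrow> lam \<le> mu"
    and sup0: "\<forall>t. t \<notin> insert b Os \<longrightarrow> w0 t = 0"
    and q1: "qb X (insert b Os) w0 = 1"
  shows "qa X (insert b Os) w0 \<ge> lam"
proof -
  define B where "B = insert b Os"
  have fB': "finite B" using fB by (simp add: B_def)
  have bB: "b \<in> B" by (simp add: B_def)
  have geq: "gen_eig_eq X Os b mu w \<longleftrightarrow>
     (\<forall>t. t \<notin> B \<longrightarrow> w t = 0) \<and> (\<forall>t\<in>B. LH X B t w = mu * bt X t * w t)" for mu w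
    by (simp add: gen_eig_eq_iff B_def)
  have gev: "gen_eigenvalue X Os b mu \<longleftrightarrow>
     (\<exists>w. (\<forall>t. t \<notin> B \<longrightarrow> w t = 0) \<and> (\<forall>t\<in>B. LH X B t w = mu * bt X t * w t) \<and> (\<exists>t\<in>B. w t \<noteq> 0))" for mu
    unfolding gen_eigenvalue_def geq B_def by blast
  have regular: "qa X B w + qb X B w > 0"
    if ws: "\<forall>t. t \<notin> B \<longrightarrow> w t = 0" and nz: "\<exists>t\<in>B. w t \<noteq> 0" for w
  proof (rule ccontr)
    assume "\<not> qa X B w + qb X B w > 0"
    then have z: "qa X B w = 0" "qb X B w = 0" using qa_nonneg[of X B w] qb_nonneg[of X B w] by auto
    have "\<forall>x\<in>X. (Pw B w x)^2 = 0"
      using z(1) fX by (simp add: qa_def sum_nonneg_eq_0_iff)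
    then have P0: "\<forall>x\<in>X. Pw B w x = 0" by simp
    have "\<forall>t\<in>B. bt X t * (w t)^2 = 0"
      using z(2) fB' by (simp add: qb_def sum_nonneg_eq_0_iff bt_nonneg)
    then have B0: "\<forall>t\<in>B. bt X t * w t = 0" by (simp add: power2_eq_square)
    have "\<forall>t\<in>B. LH X B t w = (lam - 1) * bt X t * w t"
      using P0 B0 by (simp add: LH_eq)
    then have "gen_eigenvalue X Os b (lam - 1)" using ws nz by (auto simp: gev)
    then show False using mn by fastforce
  qed
  define K where "K = {w. (\<forall>t. t \<notin> B \<longrightarrow> w t = (0::real)) \<and> (\<Sum>t\<in>B. (w t)^2) = 1}"
  have cK: "compact K" unfolding K_def by (rule compact_K[OF fB'])
  have Kne: "(\<lambda>t. if t = b then 1 else 0) \<in> K"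
  proof -
    have "(\<Sum>t\<in>B. ((\<lambda>t. if t = b then 1 else (0::real)) t)^2) = (\<Sum>t\<in>B. if t = b then 1 else 0)"
      by (rule sum.cong) auto
    then show ?thesis using fB' bB by (auto simp: K_def)
  qed
  have Knz: "\<exists>t\<in>B. w t \<noteq> 0" if "w \<in> K" for w
  proof (rule ccontr)
    assume "\<not> (\<exists>t\<in>B. w t \<noteq> 0)"
    then have "(\<Sum>t\<in>B. (w t)^2) = 0" by simp
    then show False using that by (simp add: K_def)
  qed
  have Ksup: "\<forall>t. t \<notin> B \<longrightarrow> w t = 0" if "w \<in> K" for w using that by (simp add: K_def)
  define f where "f = (\<lambda>w. qa X B w / (qa X B w + qb X B w))"
  have contf: "continuous_on K f"
    unfolding f_def
    apply (rule continuous_on_divide)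
    subgoal unfolding qa_def Pw_def by (intro continuous_intros)
    subgoal unfolding qa_def Pw_def qb_def by (intro continuous_intros)
    subgoal using regular Knz Ksup by (metis less_irrefl)
    done
  obtain ws where wsK: "ws \<in> K" and wsmin: "\<forall>y\<in>K. f ws \<le> f y"
    using continuous_attains_inf[OF cK _ contf] Kne by blast
  define \<alpha> where "\<alpha> = f ws"
  have hall: "qa X B w \<ge> \<alpha> * (qa X B w + qb X B w)"
    if ws': "\<forall>t. t \<notin> B \<longrightarrow> w t = 0" for w
  proof (cases "\<exists>t\<in>B. w t \<noteq> 0")
    case False
    then have "w = (\<lambda>t. 0 * w t)" using ws' by (auto simp: fun_eq_iff)
    then have "qa X B w = 0" "qb X B w = 0"
      using qa_scale[of X B 0 w] qb_scale[of X B 0 w] by simp_all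
    then show ?thesis by simp
  next
    case True
    define r where "r = sqrt (\<Sum>t\<in>B. (w t)^2)"
    have "(\<Sum>t\<in>B. (w t)^2) > 0"
    proof -
      obtain t where "t \<in> B" "w t \<noteq> 0" using True by blast
      then have "(w t)^2 \<le> (\<Sum>t\<in>B. (w t)^2)" by (intro member_le_sum fB') auto
      moreover have "(w t)^2 > 0" using \<open>w t \<noteq> 0\<close> by simp
      ultimately show ?thesis by linarith
    qed
    then have rp: "r > 0" and r2: "r^2 = (\<Sum>t\<in>B. (w t)^2)" by (auto simp: r_def)
    define w' where "w' = (\<lambda>t. (1/r) * w t)"
    have "(\<Sum>t\<in>B. (w' t)^2) = (\<Sum>t\<in>B. (w t)^2) / r^2"
      by (simp add: w'_def power_divide sum_divide_distrib)
    then have "w' \<in> K" using rp r2 ws' by (auto simp: K_def w'_def)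
    then have "\<alpha> \<le> f w'" using wsmin by (simp add: \<alpha>_def)
    also have "f w' = qa X B w / (qa X B w + qb X B w)"
    proof -
      have "f w' = ((1/r)^2 * qa X B w) / ((1/r)^2 * (qa X B w + qb X B w))"
        unfolding f_def w'_def qa_scale qb_scale distrib_left by (rule refl)
      also have "\<dots> = qa X B w / (qa X B w + qb X B w)" using rp by simp
      finally show ?thesis .
    qed
    finally show ?thesis using regular[OF ws' True] by (simp add: pos_le_divide_eq mult.commute)
  qed
  have den: "qa X B ws + qb X B ws > 0" using regular Knz Ksup wsK by blast
  have a0: "\<alpha> \<ge> 0" unfolding \<alpha>_def f_def using den qa_nonneg[of X B ws] by simp
  have a1: "\<alpha> < 1"
  proof (rule ccontr)
    assume "\<not> \<alpha> < 1"
    then have "\<alpha> * (qa X B w0 + 1) \<ge> 1 * (qa X B w0 + 1)"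
      using qa_nonneg[of X B w0] by (intro mult_right_mono) auto
    moreover have "qa X B w0 \<ge> \<alpha> * (qa X B w0 + 1)"
      using hall[of w0] sup0 q1 by (simp add: B_def)
    ultimately show False by simp
  qed
  have Fws: "qa X B ws = \<alpha> * (qa X B ws + qb X B ws)"
    using den by (simp add: \<alpha>_def f_def)
  have eig: "LH X B t0 ws = (\<alpha> / (1 - \<alpha>)) * bt X t0 * ws t0" if t0B: "t0 \<in> B" for t0
  proof -
    define e where "e = (\<lambda>t. if t = t0 then 1 else (0::real))"
    define PA where "PA = (\<Sum>x\<in>X. Pw B ws x * Pw B e x)"
    define PB where "PB = (\<Sum>t\<in>B. bt X t * ws t * e t)"
    define c where "c = (1 - \<alpha>) * qa X B e - \<alpha> * qb X B e"
    have esup: "\<forall>t. t \<notin> B \<longrightarrow> e t = 0" using t0B by (auto simp: e_def)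
    have c0: "c \<ge> 0" using hall[OF esup] by (simp add: c_def algebra_simps)
    have "\<forall>s. 2 * s * ((1 - \<alpha>) * PA - \<alpha> * PB) + s^2 * c \<ge> 0"
    proof
      fix s :: real
      have sup': "\<forall>t. t \<notin> B \<longrightarrow> ws t + s * e t = 0" using Ksup[OF wsK] esup by simp
      have "qa X B (\<lambda>t. ws t + s * e t) \<ge> \<alpha> * (qa X B (\<lambda>t. ws t + s * e t) + qb X B (\<lambda>t. ws t + s * e t))"
        by (rule hall[OF sup'])
      then show "2 * s * ((1 - \<alpha>) * PA - \<alpha> * PB) + s^2 * c \<ge> 0"
        unfolding qa_lin qb_lin PA_def[symmetric] PB_def[symmetric] using Fws
        by (simp add: c_def algebra_simps)
    qed
    then have L0: "(1 - \<alpha>) * PA - \<alpha> * PB = 0" using quad_lemma c0 by blast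
    have "PA = LH X B t0 ws"
      using Pw_ind[OF fB' t0B] by (simp add: PA_def e_def LH_eq mult.commute)
    moreover have "PB = bt X t0 * ws t0"
      unfolding PB_def e_def using sum_ind[OF fB' t0B, of "\<lambda>t. bt X t * ws t"] by simp
    ultimately show ?thesis using L0 a1 by (simp add: field_simps)
  qed
  have "gen_eigenvalue X Os b (\<alpha> / (1 - \<alpha>))"
    unfolding gev using Ksup[OF wsK] Knz[OF wsK] eig by blast
  then have lm: "lam \<le> \<alpha> / (1 - \<alpha>)" using mn by blast
  have "qa X B w0 \<ge> \<alpha> * (qa X B w0 + 1)"
    using hall[of w0] sup0 q1 by (simp add: B_def)
  then have "(1 - \<alpha>) * qa X B w0 \<ge> \<alpha>" by (simp add: algebra_simps)
  then have "qa X B w0 \<ge> \<alpha> / (1 - \<alpha>)" using a1 by (simp add: divide_le_eq mult.commute)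
  then show ?thesis using lm by (simp add: B_def)
qed

definition Inv :: "(real^'n) set \<Rightarrow> real \<Rightarrow> ('n::finite) term set \<Rightarrow> bool" where
  "Inv X eps Os \<longleftrightarrow> finite Os \<and> (\<forall>h\<in>poly_span Os. gw_norm X h = 1 \<longrightarrow> \<not> approx_vanishing X eps h)"

lemma span_sup: "h \<in> poly_span Os \<Longrightarrow> \<forall>t. t \<notin> Os \<longrightarrow> h t = 0"
  by (auto simp: poly_span_def)

lemma Inv_init: "Inv X eps {one_term}"
proof -
  have "gw_norm X h = 0" if "h \<in> poly_span {one_term}" for h
  proof -
    have "gw_norm X h = sqrt (qb X {one_term} h)"
      using gw_norm_qb[of "{one_term}" h X] span_sup[OF that] by simp
    moreover have "bt X one_term = 0" by (simp add: bt_eq term_gnorm_def tdeg_def one_term_def)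
    ultimately show ?thesis by (simp add: qb_def)
  qed
  then show ?thesis by (auto simp: Inv_def)
qed

lemma Inv_step:
  assumes fX: "finite X" and e0: "eps \<ge> 0" and inv: "Inv X eps Os"
    and S2: "abm_S2 X Os b lam v" and gt: "\<not> sqrt lam \<le> eps"
  shows "Inv X eps (insert b Os)"
proof -
  have fB: "finite (insert b Os)" using inv by (simp add: Inv_def)
  have mn: "\<forall>mu. gen_eigenvalue X Os b mu \<longrightarrow> lam \<le> mu" using S2 by (simp add: abm_S2_def)
  have "\<not> approx_vanishing X eps h" if hs: "h \<in> poly_span (insert b Os)" and g1: "gw_norm X h = 1" for h
  proof
    assume av: "approx_vanishing X eps h"
    have sup: "\<forall>t. t \<notin> insert b Os \<longrightarrow> h t = 0" using span_sup[OF hs] .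
    have "sqrt (qb X (insert b Os) h) = 1" using gw_norm_qb[OF fB sup] g1 by simp
    then have "qb X (insert b Os) h = 1" by simp
    then have "qa X (insert b Os) h \<ge> lam" using rayleigh[OF fX fB mn sup] by simp
    then have "sqrt (qa X (insert b Os) h) \<ge> sqrt lam" by (rule real_sqrt_le_mono)
    then have "eval_norm X h > eps" using eval_norm_qa[OF fB sup, of X] gt by linarith
    then show False using av by (simp add: approx_vanishing_def)
  qed
  then show ?thesis using fB by (simp add: Inv_def)
qed

lemma reach_Inv:
  assumes fX: "finite X" and e0: "eps \<ge> 0"
    and r: "abm_reachable X eps ordl s"
  shows "Inv X eps (fst (snd (snd s)))"
  using r unfolding abm_reachable_def
proof (induction rule: rtranclp_induct)
  case base
  then show ?case by (simp add: abm_init_def Inv_init)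
next
  case (step y z)
  from step.hyps(2) step.IH show ?case
  proof cases
    case (process b L Os lam v d G)
    then show ?thesis using Inv_step[OF fX e0, of _ b lam v] step.IH by auto
  qed auto
qed

theorem mainTheorem3:
  fixes X :: "(real^'n) set" and eps :: real and ordl :: "('n::finite) term \<Rightarrow> 'n term \<Rightarrow> bool"
  assumes "finite X" and "eps \<ge> 0"
    and "term_ordering ordl" and "degree_compatible ordl"
  shows
    "(\<forall>d L Os G stp. abm_reachable X eps ordl (d, L, Os, G, stp) \<longrightarrow>
        (\<forall>h\<in>poly_span Os. gw_norm X h = 1 \<longrightarrow> \<not> approx_vanishing X eps h))
     \<and>
     (\<forall>d L Os G b lam v. abm_reachable X eps ordl (d, L, Os, G, False) \<longrightarrow>
        b \<in> L \<longrightarrow> (\<forall>b'\<in>L. b' \<noteq> b \<longrightarrow> ordl b b') \<longrightarrow>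
        abm_S2 X Os b lam v \<longrightarrow> sqrt lam \<le> eps \<longrightarrow>
        gw_norm X v = 1 \<and> v b \<noteq> 0 \<and> eval_norm X v \<le> sqrt lam)"
proof (rule conjI; intro allI impI)
  fix d L Os G stp
  assume "abm_reachable X eps ordl (d, L, Os, G, stp)"
  then have "Inv X eps Os" using reach_Inv[OF assms(1,2)] by fastforce
  then show "\<forall>h\<in>poly_span Os. gw_norm X h = 1 \<longrightarrow> \<not> approx_vanishing X eps h"
    by (simp add: Inv_def)
next
  fix d L Os G b lam v
  assume r: "abm_reachable X eps ordl (d, L, Os, G, False)"
    and S2: "abm_S2 X Os b lam v" and le: "sqrt lam \<le> eps"
  have inv: "Inv X eps Os" using reach_Inv[OF assms(1,2) r] by simp
  define B where "B = insert b Os"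
  have fB: "finite B" using inv by (simp add: Inv_def B_def)
  have ge: "gen_eig_eq X Os b lam v" using S2 by (simp add: abm_S2_def)
  have sup: "\<forall>t. t \<notin> B \<longrightarrow> v t = 0" and eq: "\<forall>t\<in>B. LH X B t v = lam * bt X t * v t"
    using ge by (simp_all add: gen_eig_eq_iff B_def)
  have q1: "qb X B v = 1" using S2 by (simp add: abm_S2_def qb_def bt_def B_def)
  have gw: "gw_norm X v = 1" using gw_norm_qb[OF fB sup] q1 by simp
  have "qa X B v = (\<Sum>t\<in>B. v t * (lam * bt X t * v t))"
    unfolding qa_bilin using eq by (intro sum.cong) auto
  also have "\<dots> = lam * qb X B v"
    by (simp add: qb_def sum_distrib_left power2_eq_square mult_ac)
  finally have qal: "qa X B v = lam" using q1 by simp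
  have en: "eval_norm X v = sqrt lam" using eval_norm_qa[OF fB sup] qal by simp
  have vb: "v b \<noteq> 0"
  proof
    assume "v b = 0"
    then have "v \<in> poly_span Os" using sup by (auto simp: poly_span_def B_def)
    then have "\<not> approx_vanishing X eps v" using inv gw by (simp add: Inv_def)
    then show False using en le by (simp add: approx_vanishing_def)
  qed
  show "gw_norm X v = 1 \<and> v b \<noteq> 0 \<and> eval_norm X v \<le> sqrt lam"
    using gw vb en by simp
qed

end
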